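(* Let $\vdash\subseteq Sqt$ satisfy (A), (Mon), (Cut), (Com), ($\bot$), ($\wedge$I), ($\wedge$E), ($\to$0), ($\to$1), ($\to$2). Then for every $\varphi\in Form$ and every $\Gamma\in W^c_\vdash$: $\mathfrak M^c_\vdash,\Gamma\models\varphi$ iff $\varphi\in\Gamma$.
   Context: $Form$: $\varphi::=p\mid\bot\mid(\varphi\wedge\varphi)\mid(\varphi\to\varphi)$ over a countable set $P0$ ($\wedge$ left-associative, binds tighter than $\to$). Model $(W,R,V)$ with $W\ne\emptyset$, $R\subseteq W\times W$, $V:P0\to\wp(W)$; satisfaction: $\bot$ never true, $p$ true at $s$ iff $s\in V(p)$, $\wedge$ pointwise, $\varphi\to\psi$ true at $s$ iff every $R$-successor $t$ of $s$ satisfying $\varphi$ satisfies $\psi$. Sequents: $(\Gamma,\varphi)$ with $\Gamma\subseteq Form$; $\Gamma\vdash\varphi$ means $(\Gamma,\varphi)\in\vdash$; $\psi\vdash\varphi$ means $\{\psi\}\vdash\varphi$; $\vdash\varphi$ means $\emptyset\vdash\varphi$. Rules: (A) $\Gamma\cup\{\varphi\}\vdash\varphi$; (Mon) $\Gamma\subseteq\Delta$, $\Gamma\vdash\varphi\Rightarrow\Delta\vdash\varphi$; (Cut) $\Gamma\cup\{\psi\}\vdash\varphi$, $\Delta\vdash\psi\Rightarrow\Gamma\cup\Delta\vdash\varphi$; (Com) $\Gamma\vdash\varphi\Rightarrow\Gamma'\vdash\varphi$ for a finite $\Gamma'\subseteq\Gamma$; ($\bot$) $\bot\vdash\varphi$;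 ($\wedge$I) $\{\varphi,\psi\}\vdash\varphi\wedge\psi$; ($\wedge$E) $\varphi\wedge\psi\vdash\varphi$, $\varphi\wedge\psi\vdash\psi$; ($\to$0) $\vdash\varphi\to\varphi$; ($\to$1) $\Gamma\vdash\varphi\Rightarrow\{\psi\to\chi:\chi\in\Gamma\}\vdash\psi\to\varphi$; ($\to$2) $\{\varphi\to\psi,\psi\to\chi\}\vdash\varphi\to\chi$. $\Gamma$ is $\vdash$-consistent iff $\Gamma\nvdash\varphi$ for some $\varphi$; $\vdash$-deduction closed iff $\Gamma\vdash\psi\Rightarrow\psi\in\Gamma$. For $n\ge2$, $\vdash$ satisfies $(\alpha,\{\beta_1,\dots,\beta_n\})$ iff (i) for all $\Gamma,\varphi$: if $\Gamma\cup\{\beta_i\}\vdash\varphi$ for all $i$ then $\Gamma\cup\{\alpha\}\vdash\varphi$, and (ii) for all $\varphi,\psi_1,\dots,\psi_n$: $\{\psi_i\wedge\beta_i\to\varphi:1\le i\le n\}\vdash\psi_1\wedge\dots\wedge\psi_n\wedge\alpha\to\varphi$. $\Gamma$ is $\vdash$-prime iff whenever $\vdash$ satisfies $(\alpha,\{\beta_1,\dots,\beta_n\})$ ($n\ge2$) and $\alpha\in\Gamma$, some $\beta_i\in\Gamma$. $\Gamma R_\to\Delta$ iff $\varphi\to\psi\in\Gamma$ and $\varphi\in\Delta$ imply $\psi\in\Delta$. The canonical model $\mathfrak M^c_\vdash=(W^c_\vdash,R^c_\vdash,V^c_\vdash)$: $W^c_\vdash$ is the set of $\vdash$-consistent, $\vdash$-deduction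 closed, $\vdash$-prime subsets of $Form$; $R^c_\vdash=R_\to\cap(W^c_\vdash\times W^c_\vdash)$; $V^c_\vdash(p)=\{\Gamma\in W^c_\vdash:p\in\Gamma\}$. *)

theory Defs
  imports Main "HOL-Library.Countable"
begin

datatype 'p form = Var 'p | Bot | Conj "'p form" "'p form" | Imp "'p form" "'p form"

type_synonym 'p cons = "'p form set \<Rightarrow> 'p form \<Rightarrow> bool"

fun sat :: "'s set \<Rightarrow> ('s \<times> 's) set \<Rightarrow> ('p \<Rightarrow> 's set) \<Rightarrow> 's \<Rightarrow> 'p form \<Rightarrow> bool" where
  "sat W R V s (Var p) = (s \<in> V p)"
| "sat W R V s Bot = False"
| "sat W R V s (Conj a b) = (sat W R V s a \<and> sat W R V s b)"
| "sat W R V s (Imp a b) = (\<forall>t. (s, t) \<in> R \<longrightarrow> sat W R V t a \<longrightarrow> sat W R V t b)"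

definition rules :: "'p cons \<Rightarrow> bool" where
  "rules D \<longleftrightarrow>
     (\<forall>\<Gamma> \<phi>. D (\<Gamma> \<union> {\<phi>}) \<phi>)
   \<and> (\<forall>\<Gamma> \<Delta> \<phi>. \<Gamma> \<subseteq> \<Delta> \<longrightarrow> D \<Gamma> \<phi> \<longrightarrow> D \<Delta> \<phi>)
   \<and> (\<forall>\<Gamma> \<Delta> \<phi> \<psi>. D (\<Gamma> \<union> {\<psi>}) \<phi> \<longrightarrow> D \<Delta> \<psi> \<longrightarrow> D (\<Gamma> \<union> \<Delta>) \<phi>)
   \<and> (\<forall>\<Gamma> \<phi>. D \<Gamma> \<phi> \<longrightarrow> (\<exists>\<Gamma>'. finite \<Gamma>' \<and> \<Gamma>' \<subseteq> \<Gamma> \<and> D \<Gamma>' \<phi>))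
   \<and> (\<forall>\<phi>. D {Bot} \<phi>)
   \<and> (\<forall>\<phi> \<psi>. D {\<phi>, \<psi>} (Conj \<phi> \<psi>))
   \<and> (\<forall>\<phi> \<psi>. D {Conj \<phi> \<psi>} \<phi> \<and> D {Conj \<phi> \<psi>} \<psi>)
   \<and> (\<forall>\<phi>. D {} (Imp \<phi> \<phi>))
   \<and> (\<forall>\<Gamma> \<phi> \<psi>. D \<Gamma> \<phi> \<longrightarrow> D {Imp \<psi> \<chi> | \<chi>. \<chi> \<in> \<Gamma>} (Imp \<psi> \<phi>))
   \<and> (\<forall>\<phi> \<psi> \<chi>. D {Imp \<phi> \<psi>, Imp \<psi> \<chi>} (Imp \<phi> \<chi>))"

definition consistent :: "'p cons \<Rightarrow> 'p form set \<Rightarrow> bool" where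
  "consistent D \<Gamma> \<longleftrightarrow> (\<exists>\<phi>. \<not> D \<Gamma> \<phi>)"

definition deduction_closed :: "'p cons \<Rightarrow> 'p form set \<Rightarrow> bool" where
  "deduction_closed D \<Gamma> \<longleftrightarrow> (\<forall>\<psi>. D \<Gamma> \<psi> \<longrightarrow> \<psi> \<in> \<Gamma>)"

definition big_conj :: "'p form list \<Rightarrow> 'p form \<Rightarrow> 'p form" where
  "big_conj ps a = Conj (foldl Conj (hd ps) (tl ps)) a"

(* D satisfies (alpha, {beta_1,...,beta_n}), n = length bs >= 2 *)
definition satisfies_rule :: "'p cons \<Rightarrow> 'p form \<Rightarrow> 'p form list \<Rightarrow> bool" where
  "satisfies_rule D a bs \<longleftrightarrow> length bs \<ge> 2
   \<and> (\<forall>\<Gamma> \<phi>. (\<forall>i < length bs. D (\<Gamma> \<union> {bs ! i}) \<phi>) \<longrightarrow> D (\<Gamma> \<union> {a}) \<phi>)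
   \<and> (\<forall>\<phi> ps. length ps = length bs \<longrightarrow>
        D {Imp (Conj (ps ! i) (bs ! i)) \<phi> | i. i < length bs} (Imp (big_conj ps a) \<phi>))"

definition prime :: "'p cons \<Rightarrow> 'p form set \<Rightarrow> bool" where
  "prime D \<Gamma> \<longleftrightarrow> (\<forall>a bs. satisfies_rule D a bs \<longrightarrow> a \<in> \<Gamma> \<longrightarrow> (\<exists>i < length bs. bs ! i \<in> \<Gamma>))"

definition R_imp :: "('p form set \<times> 'p form set) set" where
  "R_imp = {(\<Gamma>, \<Delta>). \<forall>\<phi> \<psi>. Imp \<phi> \<psi> \<in> \<Gamma> \<longrightarrow> \<phi> \<in> \<Delta> \<longrightarrow> \<psi> \<in> \<Delta>}"

definition Wc :: "'p cons \<Rightarrow> 'p form set set" where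
  "Wc D = {\<Gamma>. consistent D \<Gamma> \<and> deduction_closed D \<Gamma> \<and> prime D \<Gamma>}"

definition Rc :: "'p cons \<Rightarrow> ('p form set \<times> 'p form set) set" where
  "Rc D = R_imp \<inter> (Wc D \<times> Wc D)"

definition Vc :: "'p cons \<Rightarrow> 'p \<Rightarrow> 'p form set set" where
  "Vc D p = {\<Gamma> \<in> Wc D. Var p \<in> \<Gamma>}"

end

theory Submission
  imports Defs
begin

inductive_set CT :: "'p form set \<Rightarrow> 'p form set" for S where
  base: "x \<in> S \<Longrightarrow> x \<in> CT S"
| cj: "a \<in> CT S \<Longrightarrow> b \<in> CT S \<Longrightarrow> Conj a b \<in> CT S"

lemma CT_mono: "c \<in> CT S \<Longrightarrow> S \<subseteq> S' \<Longrightarrow> c \<in> CT S'"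
  by (induction rule: CT.induct) (auto intro: CT.intros)

lemma foldl_CT: "x \<in> CT S \<Longrightarrow> set ys \<subseteq> CT S \<Longrightarrow> foldl Conj x ys \<in> CT S"
  by (induction ys arbitrary: x) (auto intro: CT.intros)

context
  fixes D :: "'p cons"
  assumes R: "rules D"
begin

lemmas RR = R[unfolded rules_def]

lemma rA: "D (G \<union> {x}) x"  using RR[THEN conjunct1] by blast
lemma rMon: "G \<subseteq> H \<Longrightarrow> D G x \<Longrightarrow> D H x"  using RR[THEN conjunct2, THEN conjunct1] by blast
lemma rCut: "D (G \<union> {y}) x \<Longrightarrow> D H y \<Longrightarrow> D (G \<union> H) x"  using RR[THEN conjunct2, THEN conjunct2, THEN conjunct1] by blast
lemma rCom: "D G x \<Longrightarrow> \<exists>G'. finite G' \<and> G' \<subseteq> G \<and> D G' x"  using RR[THEN conjunct2, THEN conjunct2, THEN conjunct2, THEN conjunct1] by blast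
lemma rBot: "D {Bot} x"  using RR[THEN conjunct2, THEN conjunct2, THEN conjunct2, THEN conjunct2, THEN conjunct1] by blast
lemma rConjI: "D {a, b} (Conj a b)"  using RR[THEN conjunct2, THEN conjunct2, THEN conjunct2, THEN conjunct2, THEN conjunct2, THEN conjunct1] by blast
lemma rConjE1: "D {Conj a b} a"  using RR[THEN conjunct2, THEN conjunct2, THEN conjunct2, THEN conjunct2, THEN conjunct2, THEN conjunct2, THEN conjunct1, THEN spec, THEN spec, THEN conjunct1] by blast
lemma rConjE2: "D {Conj a b} b"  using RR[THEN conjunct2, THEN conjunct2, THEN conjunct2, THEN conjunct2, THEN conjunct2, THEN conjunct2, THEN conjunct1, THEN spec, THEN spec, THEN conjunct2] by blast
lemma rImp0: "D {} (Imp a a)"  using RR[THEN conjunct2, THEN conjunct2, THEN conjunct2, THEN conjunct2, THEN conjunct2, THEN conjunct2, THEN conjunct2, THEN conjunct1] by blast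
lemma rImp1: "D G x \<Longrightarrow> D {Imp y z | z. z \<in> G} (Imp y x)"
  using RR[THEN conjunct2, THEN conjunct2, THEN conjunct2, THEN conjunct2, THEN conjunct2, THEN conjunct2, THEN conjunct2, THEN conjunct2, THEN conjunct1] by blast
lemma rImp2: "D {Imp a b, Imp b c} (Imp a c)"  using RR[THEN conjunct2, THEN conjunct2, THEN conjunct2, THEN conjunct2, THEN conjunct2, THEN conjunct2, THEN conjunct2, THEN conjunct2, THEN conjunct2] by blast

lemma sA: "D {a} a" using rA[of "{}" a] by simp

lemma strans: "D {a} b \<Longrightarrow> D {b} c \<Longrightarrow> D {a} c"
  using rCut[of "{}" b c "{a}"] by simp

lemma sconj: "D {x} a \<Longrightarrow> D {x} b \<Longrightarrow> D {x} (Conj a b)"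
proof -
  assume 1: "D {x} a" and 2: "D {x} b"
  have "D ({b} \<union> {a}) (Conj a b)" using rConjI[of a b] by (simp add: insert_commute)
  from rCut[OF this 1] have "D ({x} \<union> {b}) (Conj a b)" by (simp add: insert_commute)
  from rCut[OF this 2] show ?thesis by simp
qed

lemma F1: "deduction_closed D G \<Longrightarrow> D {} x \<Longrightarrow> x \<in> G"
  unfolding deduction_closed_def using rMon by blast

lemma F2: assumes c: "deduction_closed D G" and "D {a} b" shows "Imp a b \<in> G"
proof -
  have "D {Imp a z | z. z \<in> {a}} (Imp a b)" by (rule rImp1[OF assms(2)])
  moreover have "{Imp a z | z. z \<in> {a}} = {Imp a a}" by auto
  moreover have "Imp a a \<in> G" using F1[OF c rImp0] .
  ultimately have "D G (Imp a b)" using rMon[of "{Imp a a}" G "Imp a b"] by simp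
  thus ?thesis using c unfolding deduction_closed_def by blast
qed

lemma F3: assumes c: "deduction_closed D G" and "Imp a b \<in> G" "Imp b d \<in> G" shows "Imp a d \<in> G"
proof -
  have "D G (Imp a d)" using rMon[OF _ rImp2[of a b d]] assms by auto
  thus ?thesis using c unfolding deduction_closed_def by blast
qed

lemma F4: assumes c: "deduction_closed D G" and "Imp x a \<in> G" "Imp x b \<in> G"
  shows "Imp x (Conj a b) \<in> G"
proof -
  have "D {Imp x z | z. z \<in> {a, b}} (Imp x (Conj a b))" by (rule rImp1[OF rConjI])
  moreover have "{Imp x z | z. z \<in> {a, b}} \<subseteq> G" using assms by auto
  ultimately have "D G (Imp x (Conj a b))" by (rule rMon[rotated])
  thus ?thesis using c unfolding deduction_closed_def by blast
qed

lemma LL: assumes c: "deduction_closed D G" and c0: "c0 \<in> CT T" and i: "Imp c0 \<beta> \<in> G"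
  shows "c \<in> CT (T \<union> {\<beta>}) \<Longrightarrow> \<exists>c'\<in>CT T. Imp c' c \<in> G"
proof (induction rule: CT.induct)
  case (base x)
  show ?case
  proof (cases "x = \<beta>")
    case True thus ?thesis using c0 i by blast
  next
    case False
    hence "x \<in> T" using base by auto
    thus ?thesis using F2[OF c sA[of x]] by (blast intro: CT.intros)
  qed
next
  case (cj a b)
  then obtain ca cb where a: "ca \<in> CT T" "Imp ca a \<in> G" and b: "cb \<in> CT T" "Imp cb b \<in> G" by blast
  have "Imp (Conj ca cb) a \<in> G" using F3[OF c F2[OF c rConjE1] a(2)] .
  moreover have "Imp (Conj ca cb) b \<in> G" using F3[OF c F2[OF c rConjE2] b(2)] .
  ultimately have "Imp (Conj ca cb) (Conj a b) \<in> G" using F4[OF c] by blast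
  thus ?case using a b by (blast intro: CT.intros)
qed

lemma LP: assumes p0: "p0 \<in> CT T"
  shows "c \<in> CT (T \<union> {\<beta>}) \<Longrightarrow> \<exists>p\<in>CT T. D {Conj p \<beta>} c"
proof (induction rule: CT.induct)
  case (base x)
  show ?case
  proof (cases "x = \<beta>")
    case True thus ?thesis using p0 rConjE2 by blast
  next
    case False
    hence "x \<in> T" using base by auto
    thus ?thesis using rConjE1 by (blast intro: CT.intros)
  qed
next
  case (cj a b)
  then obtain pa pb where a: "pa \<in> CT T" "D {Conj pa \<beta>} a" and b: "pb \<in> CT T" "D {Conj pb \<beta>} b" by blast
  have "D {Conj (Conj pa pb) \<beta>} (Conj pa \<beta>)"
    by (rule sconj[OF strans[OF rConjE1 rConjE1] rConjE2])
  hence 1: "D {Conj (Conj pa pb) \<beta>} a" using strans a(2) by blast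
  have "D {Conj (Conj pa pb) \<beta>} (Conj pb \<beta>)"
    by (rule sconj[OF strans[OF rConjE1 rConjE2] rConjE2])
  hence 2: "D {Conj (Conj pa pb) \<beta>} b" using strans b(2) by blast
  show ?case using sconj[OF 1 2] a b by (blast intro: CT.intros)
qed

lemma LG: "finite F \<Longrightarrow> F \<subseteq> T \<Longrightarrow> \<phi> \<in> T \<Longrightarrow> \<exists>c\<in>CT T. \<forall>\<theta>\<in>F. D {c} \<theta>"
proof (induction rule: finite_induct)
  case empty
  have "\<phi> \<in> CT T" using empty(2) by (rule CT.base)
  thus ?case by blast
next
  case (insert x F)
  have "F \<subseteq> T" "x \<in> T" using insert.prems by auto
  then obtain c where c: "c \<in> CT T" "\<forall>\<theta>\<in>F. D {c} \<theta>" using insert.IH insert.prems(2) by blast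
  have "Conj c x \<in> CT T" using c(1) CT.base[OF \<open>x \<in> T\<close>] by (rule CT.cj)
  moreover have "\<forall>\<theta>\<in>insert x F. D {Conj c x} \<theta>"
  proof
    fix \<theta> assume "\<theta> \<in> insert x F"
    thus "D {Conj c x} \<theta>"
    proof
      assume "\<theta> = x" thus ?thesis using rConjE2 by simp
    next
      assume "\<theta> \<in> F" hence "D {c} \<theta>" using c(2) by blast
      thus ?thesis using strans[OF rConjE1] by blast
    qed
  qed
  ultimately show ?case by blast
qed

lemma LH: "finite F \<Longrightarrow> \<forall>G. D (G \<union> F) \<chi> \<longrightarrow> (\<forall>\<theta>\<in>F. D {c} \<theta>) \<longrightarrow> D (G \<union> {c}) \<chi>"
proof (induction rule: finite_induct)
  case empty
  show ?case
  proof (intro allI impI)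
    fix G assume "D (G \<union> {}) \<chi>"
    moreover have "G \<union> {} \<subseteq> G \<union> {c}" by blast
    ultimately show "D (G \<union> {c}) \<chi>" using rMon by blast
  qed
next
  case (insert x F)
  show ?case
  proof (intro allI impI)
    fix G assume 1: "D (G \<union> insert x F) \<chi>" and 2: "\<forall>\<theta>\<in>insert x F. D {c} \<theta>"
    have e1: "G \<union> insert x F = (G \<union> F) \<union> {x}" by blast
    have "D ((G \<union> F) \<union> {x}) \<chi>" using 1 unfolding e1 .
    moreover have "D {c} x" using 2 by blast
    ultimately have "D ((G \<union> F) \<union> {c}) \<chi>" by (rule rCut)
    moreover have e2: "(G \<union> F) \<union> {c} = (G \<union> {c}) \<union> F" by blast
    ultimately have 3: "D ((G \<union> {c}) \<union> F) \<chi>" by simp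
    have "\<forall>\<theta>\<in>F. D {c} \<theta>" using 2 by blast
    hence "D ((G \<union> {c}) \<union> {c}) \<chi>" using insert.IH 3 by blast
    thus "D (G \<union> {c}) \<chi>" by simp
  qed
qed

lemma extend:
  assumes c: "deduction_closed D G" and n: "Imp \<phi> \<psi> \<notin> G"
  shows "\<exists>T\<in>Wc D. (G, T) \<in> R_imp \<and> \<phi> \<in> T \<and> \<psi> \<notin> T"
proof -
  define A where "A = {T. \<phi> \<in> T \<and> (\<forall>c\<in>CT T. Imp c \<psi> \<notin> G)}"
  have phiA: "{\<phi>} \<in> A"
  proof -
    have "c \<in> CT {\<phi>} \<Longrightarrow> D {\<phi>} c" for c
      by (induction rule: CT.induct) (auto intro: sconj sA)
    hence "c \<in> CT {\<phi>} \<Longrightarrow> Imp c \<psi> \<notin> G" for c using F2[OF c] F3[OF c] n by blast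
    thus ?thesis unfolding A_def by blast
  qed
  have "\<exists>M\<in>A. \<forall>X\<in>A. M \<subseteq> X \<longrightarrow> X = M"
  proof (rule subset_Zorn_nonempty)
    show "A \<noteq> {}" using phiA by blast
  next
    fix C assume ne: "C \<noteq> {}" and ch: "subset.chain A C"
    have CA: "C \<subseteq> A" and ch2: "\<forall>X\<in>C. \<forall>Y\<in>C. X \<subseteq> Y \<or> Y \<subseteq> X"
      using ch unfolding subset_chain_def by blast+
    have "c \<in> CT (\<Union>C) \<Longrightarrow> \<exists>X\<in>C. c \<in> CT X" for c
    proof (induction rule: CT.induct)
      case (base x) thus ?case by (blast intro: CT.intros)
    next
      case (cj a b)
      then obtain X Y where XY: "X \<in> C" "a \<in> CT X" "Y \<in> C" "b \<in> CT Y" by blast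
      hence "X \<subseteq> Y \<or> Y \<subseteq> X" using ch2 by blast
      thus ?case
      proof
        assume "X \<subseteq> Y"
        hence "Conj a b \<in> CT Y" using XY CT_mono CT.cj by blast
        thus ?case using XY by blast
      next
        assume "Y \<subseteq> X"
        hence "Conj a b \<in> CT X" using XY CT_mono CT.cj by blast
        thus ?case using XY by blast
      qed
    qed
    moreover have "\<phi> \<in> \<Union>C" using ne CA unfolding A_def by blast
    ultimately show "\<Union>C \<in> A" using CA unfolding A_def by blast
  qed
  then obtain M where MA: "M \<in> A" and Mmax: "\<forall>X\<in>A. M \<subseteq> X \<longrightarrow> X = M" by blast
  have phiM: "\<phi> \<in> M" and good: "\<forall>c\<in>CT M. Imp c \<psi> \<notin> G" using MA unfolding A_def by auto
  have phiCT: "\<phi> \<in> CT M" using phiM by (rule CT.base)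
  have notin: "\<beta> \<notin> M \<Longrightarrow> \<exists>c\<in>CT (M \<union> {\<beta>}). Imp c \<psi> \<in> G" for \<beta>
  proof (rule ccontr)
    assume "\<beta> \<notin> M" "\<not> (\<exists>c\<in>CT (M \<union> {\<beta>}). Imp c \<psi> \<in> G)"
    hence "M \<union> {\<beta>} \<in> A" using phiM unfolding A_def by auto
    with Mmax \<open>\<beta> \<notin> M\<close> show False by blast
  qed
  have ext: "c0 \<in> CT M \<Longrightarrow> Imp c0 \<beta> \<in> G \<Longrightarrow> \<beta> \<in> M" for c0 \<beta>
  proof (rule ccontr)
    assume h: "c0 \<in> CT M" "Imp c0 \<beta> \<in> G" "\<beta> \<notin> M"
    then obtain c where "c \<in> CT (M \<union> {\<beta>})" "Imp c \<psi> \<in> G" using notin by blast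
    then obtain c' where "c' \<in> CT M" "Imp c' c \<in> G" using LL[OF c h(1,2)] by blast
    thus False using F3[OF c] good \<open>Imp c \<psi> \<in> G\<close> by blast
  qed
  have psiM: "\<psi> \<notin> M"
    using good F1[OF c rImp0] by (blast intro: CT.intros)
  have Rel: "(G, M) \<in> R_imp" unfolding R_imp_def using ext by (blast intro: CT.intros)
  have dc: "deduction_closed D M"
    unfolding deduction_closed_def
  proof (intro allI impI)
    fix \<chi> assume "D M \<chi>"
    then obtain F where F: "finite F" "F \<subseteq> M" "D F \<chi>" using rCom by blast
    then obtain c0 where c0: "c0 \<in> CT M" "\<forall>\<theta>\<in>F. D {c0} \<theta>" using LG phiM by blast
    have "D ({} \<union> {c0}) \<chi>" using LH[OF F(1)] F(3) c0(2) by (metis sup_bot_left)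
    hence "Imp c0 \<chi> \<in> G" using F2[OF c] by simp
    thus "\<chi> \<in> M" using ext c0 by blast
  qed
  have cons: "consistent D M" unfolding consistent_def
    using dc psiM unfolding deduction_closed_def by blast
  have pr: "prime D M" unfolding prime_def
  proof (intro allI impI)
    fix a bs assume sr: "satisfies_rule D a bs" and aM: "a \<in> M"
    show "\<exists>i<length bs. bs ! i \<in> M"
    proof (rule ccontr)
      assume "\<not> (\<exists>i<length bs. bs ! i \<in> M)"
      hence "\<forall>i<length bs. \<exists>p. p \<in> CT M \<and> Imp (Conj p (bs ! i)) \<psi> \<in> G"
      proof (intro allI impI)
        fix i assume "\<not> (\<exists>i<length bs. bs ! i \<in> M)" "i < length bs"
        then obtain c1 where c1: "c1 \<in> CT (M \<union> {bs ! i})" "Imp c1 \<psi> \<in> G" using notin by blast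
        then obtain p where "p \<in> CT M" "D {Conj p (bs ! i)} c1" using LP[OF phiCT] by blast
        thus "\<exists>p. p \<in> CT M \<and> Imp (Conj p (bs ! i)) \<psi> \<in> G" using F2[OF c] F3[OF c] c1(2) by blast
      qed
      then obtain f where f: "\<forall>i<length bs. f i \<in> CT M \<and> Imp (Conj (f i) (bs ! i)) \<psi> \<in> G"
        by metis
      define ps where "ps = map f [0..<length bs]"
      have lps: "length ps = length bs" unfolding ps_def by simp
      have l2: "length bs \<ge> 2" using sr unfolding satisfies_rule_def by blast
      have "D {Imp (Conj (ps ! i) (bs ! i)) \<psi> | i. i < length bs} (Imp (big_conj ps a) \<psi>)"
        using sr lps unfolding satisfies_rule_def by blast
      moreover have "{Imp (Conj (ps ! i) (bs ! i)) \<psi> | i. i < length bs} \<subseteq> G"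
        using f unfolding ps_def by auto
      ultimately have "D G (Imp (big_conj ps a) \<psi>)" using rMon by blast
      hence 1: "Imp (big_conj ps a) \<psi> \<in> G" using c unfolding deduction_closed_def by blast
      have sps: "set ps \<subseteq> CT M" using f unfolding ps_def by auto
      have "ps \<noteq> []" using lps l2 by auto
      have h1: "hd ps \<in> CT M" using sps \<open>ps \<noteq> []\<close> by auto
      have h2: "set (tl ps) \<subseteq> CT M" using sps \<open>ps \<noteq> []\<close> by (cases ps) auto
      from h1 h2
      have "big_conj ps a \<in> CT M" unfolding big_conj_def
        using foldl_CT aM by (blast intro: CT.intros)
      thus False using 1 good by blast
    qed
  qed
  have "M \<in> Wc D" unfolding Wc_def using cons dc pr by blast
  thus ?thesis using Rel phiM psiM by blast
qed

end

theorem mainTheorem12: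
  fixes D :: "('p::countable) cons"
  assumes "rules D"
  shows "\<forall>\<phi> \<Gamma>. \<Gamma> \<in> Wc D \<longrightarrow> (sat (Wc D) (Rc D) (Vc D) \<Gamma> \<phi> \<longleftrightarrow> \<phi> \<in> \<Gamma>)"
proof
  fix \<phi> :: "'p form"
  show "\<forall>\<Gamma>. \<Gamma> \<in> Wc D \<longrightarrow> (sat (Wc D) (Rc D) (Vc D) \<Gamma> \<phi> \<longleftrightarrow> \<phi> \<in> \<Gamma>)"
  proof (induction \<phi>)
    case (Var p) thus ?case unfolding Vc_def by simp
  next
    case Bot
    show ?case
    proof (intro allI impI)
      fix G assume "G \<in> Wc D"
      hence "consistent D G" by (simp add: Wc_def)
      have "Bot \<notin> G"
      proof
        assume "Bot \<in> G"
        hence "D G x" for x using rMon[OF assms, of "{Bot}" G x] rBot[OF assms, of x] by simp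
        thus False using \<open>consistent D G\<close> unfolding consistent_def by blast
      qed
      thus "sat (Wc D) (Rc D) (Vc D) G Bot = (Bot \<in> G)" by simp
    qed
  next
    case (Conj a b)
    show ?case
    proof (intro allI impI)
      fix G assume G: "G \<in> Wc D"
      hence c: "deduction_closed D G" by (simp add: Wc_def)
      have "Conj a b \<in> G \<longleftrightarrow> a \<in> G \<and> b \<in> G"
      proof
        assume "Conj a b \<in> G"
        hence "D G a" "D G b" using rMon[OF assms, of "{Conj a b}" G] rConjE1[OF assms, of a b]
           rConjE2[OF assms, of a b] by auto
        thus "a \<in> G \<and> b \<in> G" using c unfolding deduction_closed_def by blast
      next
        assume "a \<in> G \<and> b \<in> G"
        hence "D G (Conj a b)" using rMon[OF assms, of "{a, b}" G] rConjI[OF assms, of a b] by auto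
        thus "Conj a b \<in> G" using c unfolding deduction_closed_def by blast
      qed
      thus "sat (Wc D) (Rc D) (Vc D) G (Conj a b) = (Conj a b \<in> G)" using Conj G by simp
    qed
  next
    case (Imp a b)
    show ?case
    proof (intro allI impI)
      fix G assume G: "G \<in> Wc D"
      hence c: "deduction_closed D G" by (simp add: Wc_def)
      show "sat (Wc D) (Rc D) (Vc D) G (Imp a b) = (Imp a b \<in> G)"
      proof
        assume s: "sat (Wc D) (Rc D) (Vc D) G (Imp a b)"
        show "Imp a b \<in> G"
        proof (rule ccontr)
          assume "Imp a b \<notin> G"
          then obtain T where T: "T \<in> Wc D" "(G, T) \<in> R_imp" "a \<in> T" "b \<notin> T"
            using extend[OF assms c] by blast
          have "(G, T) \<in> Rc D" using T G unfolding Rc_def by blast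
          hence "sat (Wc D) (Rc D) (Vc D) T a \<longrightarrow> sat (Wc D) (Rc D) (Vc D) T b" using s by simp
          thus False using T Imp.IH by blast
        qed
      next
        assume i: "Imp a b \<in> G"
        show "sat (Wc D) (Rc D) (Vc D) G (Imp a b)"
          unfolding sat.simps
        proof (intro allI impI)
          fix t assume t1: "(G, t) \<in> Rc D" and t2: "sat (Wc D) (Rc D) (Vc D) t a"
          hence tW: "t \<in> Wc D" and tR: "(G, t) \<in> R_imp" unfolding Rc_def by auto
          have "a \<in> t" using t2 tW Imp.IH by blast
          hence "b \<in> t" using i tR unfolding R_imp_def by blast
          thus "sat (Wc D) (Rc D) (Vc D) t b" using tW Imp.IH by blast
        qed
      qed
    qed
  qed
qed

end
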